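(* Let $\mathbf L\in\mathbb R^3$, $\mathbf L\neq0$, and $T>0$. If a state $(\mathbf r,\mathbf v)\in\Omega$ minimizes $g(\mathbf r)$ over all states $(\mathbf r,\mathbf v)\in\Omega$ satisfying $\mathbf L(\mathbf r,\mathbf v)=\mathbf L$ and $T(\mathbf v)=T$, then all vectors $\mathbf r_i,\mathbf v_i$, $i=1,\dots,N$, lie in the plane through the origin orthogonal to $\mathbf L$; consequently the solution of the equations of motion starting from $(\mathbf r,\mathbf v)$ is a flat (planar) trajectory. That is, the minimum in this problem can be achieved only at states belonging to flat trajectories.
   Context: Fix $N\ge2$, masses $m_i>0$, $\gamma>0$. Three-dimensional configuration space $\mathfrak R_3=\{\mathbf r=(\mathbf r_1,\dots,\mathbf r_N)\in(\mathbb R^3)^N:\ \mathbf r_i\ne\mathbf r_j \text{ for } i\neq j\}$; phase space $\Omega=\mathfrak R_3\times(\mathbb R^3)^N$ with states $(\mathbf r,\mathbf v)$, $\mathbf v=(\mathbf v_1,\dots,\mathbf v_N)$. Angular momentum $\mathbf L(\mathbf r,\mathbf v)=\sum_i m_i\,\mathbf r_i\times\mathbf v_i$; kinetic energy $T(\mathbf v)=\frac12\sum_im_i|\mathbf v_i|^2$; $g(\mathbf r)=\sum_im_i|\mathbf r_i|^2$. Equations of motion: $m_i\ddot{\mathbf r}_i=\sum_{j\ne i}\gamma m_im_j(\mathbf r_j-\mathbf r_i)/|\mathbf r_j-\mathbf r_i|^3$. *)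

theory Defs
  imports "HOL-Analysis.Analysis"
begin

text \<open>Bodies are indexed by a finite type 'n (N = CARD('n)); positions and velocities
  are vectors in real^3.\<close>

definition config_space :: "('n \<Rightarrow> real^3) set" where
  "config_space = {r. \<forall>i j. i \<noteq> j \<longrightarrow> r i \<noteq> r j}"

definition ang_mom :: "('n::finite \<Rightarrow> real) \<Rightarrow> ('n \<Rightarrow> real^3) \<Rightarrow> ('n \<Rightarrow> real^3) \<Rightarrow> real^3" where
  "ang_mom m r v = (\<Sum>i\<in>UNIV. m i *\<^sub>R cross3 (r i) (v i))"

definition kin_energy :: "('n::finite \<Rightarrow> real) \<Rightarrow> ('n \<Rightarrow> real^3) \<Rightarrow> real" where
  "kin_energy m v = (1/2) * (\<Sum>i\<in>UNIV. m i * (norm (v i))\<^sup>2)"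

definition moment_inertia :: "('n::finite \<Rightarrow> real) \<Rightarrow> ('n \<Rightarrow> real^3) \<Rightarrow> real" where
  "moment_inertia m r = (\<Sum>i\<in>UNIV. m i * (norm (r i))\<^sup>2)"

definition nbody_solution ::
  "real \<Rightarrow> ('n::finite \<Rightarrow> real) \<Rightarrow> real set \<Rightarrow> (real \<Rightarrow> 'n \<Rightarrow> real^3) \<Rightarrow> (real \<Rightarrow> 'n \<Rightarrow> real^3) \<Rightarrow> bool" where
  "nbody_solution \<gamma> m I x x' \<longleftrightarrow>
     open I \<and> is_interval I \<and>
     (\<forall>t\<in>I. x t \<in> config_space) \<and>
     (\<forall>t\<in>I. \<forall>i. ((\<lambda>s. x s i) has_vector_derivative x' t i) (at t)) \<and>
     (\<forall>t\<in>I. \<forall>i. ((\<lambda>s. x' s i) has_vector_derivative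
          ((1 / m i) *\<^sub>R (\<Sum>j\<in>UNIV - {i}.
              (\<gamma> * m i * m j / (norm (x t j - x t i))^3) *\<^sub>R (x t j - x t i)))) (at t))"

end

theory Submission
  imports Defs
begin


lemma amgm: fixes a b l :: real assumes "l > 0" shows "a * b \<le> (l * a^2 + b^2 / l) / 2"
proof -
  have "0 \<le> (l*a - b)^2 / l" using assms by simp
  also have "\<dots> = l*a^2 - 2*a*b + b^2/l" using assms by (simp add: power2_eq_square field_simps)
  finally show ?thesis by simp
qed

lemma key_ineq:
  fixes r v n :: "real^3" and l :: real
  assumes n1: "norm n = 1" and l: "l > 0"
  shows "cross3 r v \<bullet> n \<le> (l * ((norm r)^2 - (r \<bullet> n)^2) + ((norm v)^2 - (v \<bullet> n)^2) / l) / 2"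
proof -
  define P where "P = r - (r \<bullet> n) *\<^sub>R n"
  define Q where "Q = v - (v \<bullet> n) *\<^sub>R n"
  have nn: "n \<bullet> n = 1" using n1 by (simp add: norm_eq_1)
  have rP: "r = P + (r \<bullet> n) *\<^sub>R n" and vQ: "v = Q + (v \<bullet> n) *\<^sub>R n" by (simp_all add: P_def Q_def)
  have "cross3 r v \<bullet> n = cross3 P Q \<bullet> n"
    apply (subst rP, subst vQ)
    by (simp add: cross_add_left cross_add_right cross_mult_left cross_mult_right inner_add_left dot_cross_self)
  also have "\<dots> \<le> norm (cross3 P Q) * norm n" by (rule norm_cauchy_schwarz)
  also have "\<dots> \<le> norm P * norm Q"
  proof -
    have "(norm (cross3 P Q))^2 \<le> (norm P * norm Q)^2" using norm_cross_dot[of P Q] zero_le_power2[of "P \<bullet> Q"] by linarith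
    then show ?thesis using n1 by (simp add: power2_le_iff_abs_le)
  qed
  also have "\<dots> \<le> (l * (norm P)^2 + (norm Q)^2 / l) / 2" by (rule amgm[OF l])
  also have "(norm P)^2 = (norm r)^2 - (r \<bullet> n)^2"
    unfolding P_def power2_norm_eq_inner by (simp add: inner_diff_left inner_diff_right nn inner_commute power2_eq_square)
  also have "(norm Q)^2 = (norm v)^2 - (v \<bullet> n)^2"
    unfolding Q_def power2_norm_eq_inner by (simp add: inner_diff_left inner_diff_right nn inner_commute power2_eq_square)
  finally show ?thesis .
qed



lemma exists_min_state:
  fixes m :: "'n::finite \<Rightarrow> real" and L :: "real^3" and T :: real
  assumes m_pos: "\<And>i. m i > 0" and L_nz: "L \<noteq> 0" and T_pos: "T > 0"
  shows "\<exists>r' v'. r' \<in> config_space \<and> ang_mom m r' v' = L \<and> kin_energy m v' = T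
           \<and> moment_inertia m r' = (norm L)^2 / (2*T)"
proof -
  obtain e where e: "cross3 L e \<noteq> 0" using cross_basis_nonzero[OF L_nz] by blast
  define u where "u = sgn (cross3 L e)"
  have nu: "norm u = 1" using e by (simp add: u_def norm_sgn)
  have uL: "u \<bullet> L = 0" unfolding u_def sgn_div_norm by (simp add: dot_cross_self inner_commute)
  define w where "w = (1 / norm L) *\<^sub>R cross3 L u"
  have uu: "u \<bullet> u = 1" using nu by (simp add: norm_eq_1)
  have uw: "cross3 u w = (1 / norm L) *\<^sub>R L"
    unfolding w_def by (simp add: cross_mult_right Lagrange uu uL inner_commute[of L u])
  have nw: "norm w = 1"
  proof -
    have "(norm (cross3 L u))^2 = (norm L)^2" using norm_cross_dot[of L u] uL nu
      by (simp add: inner_commute power_mult_distrib)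
    then have "norm (cross3 L u) = norm L" by simp
    then show ?thesis using L_nz by (simp add: w_def)
  qed
  obtain f :: "'n \<Rightarrow> nat" where f: "inj f"
    using finite_imp_inj_to_nat_seg[of "UNIV :: 'n set"] by auto
  define d where "d i = real (f i) + 1" for i
  define S where "S = (\<Sum>i\<in>UNIV. m i * (d i)^2)"
  have S_pos: "S > 0" unfolding S_def
    by (rule sum_pos) (auto simp: d_def m_pos)
  define c where "c = 2 * T / norm L"
  define k where "k = sqrt ((norm L)^2 / (2 * T * S))"
  have k_pos: "k > 0" using L_nz T_pos S_pos by (simp add: k_def)
  have k2: "k^2 * S = (norm L)^2 / (2*T)" using L_nz T_pos S_pos by (simp add: k_def)
  define r' where "r' i = (k * d i) *\<^sub>R u" for i
  define v' where "v' i = (c * k * d i) *\<^sub>R w" for i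
  have "r' \<in> config_space"
    unfolding config_space_def r'_def
  proof (intro CollectI allI impI)
    fix i j :: 'n assume "i \<noteq> j"
    then have "d i \<noteq> d j" using f by (auto simp: d_def inj_eq)
    then show "(k * d i) *\<^sub>R u \<noteq> (k * d j) *\<^sub>R u" using k_pos nu
      by (metis norm_zero scaleR_cancel_right mult_cancel_left zero_neq_one less_irrefl)
  qed
  moreover have "ang_mom m r' v' = L"
  proof -
    have "ang_mom m r' v' = (\<Sum>i\<in>UNIV. (c * k^2 / norm L * (m i * (d i)^2)) *\<^sub>R L)"
      unfolding ang_mom_def r'_def v'_def
      by (intro sum.cong refl) (simp add: cross_mult_left cross_mult_right uw power2_eq_square)
    also have "\<dots> = (c * k^2 * S / norm L) *\<^sub>R L"
      by (simp add: scaleR_sum_left[symmetric] sum_distrib_left[symmetric] sum_divide_distrib[symmetric] S_def)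
    also have "c * k^2 * S / norm L = 1" using k2 L_nz T_pos
      by (simp add: c_def field_simps power2_eq_square)
    finally show ?thesis by simp
  qed
  moreover have "kin_energy m v' = T"
  proof -
    have "kin_energy m v' = (1/2) * (c^2 * k^2 * S)"
      unfolding kin_energy_def v'_def S_def
      by (simp add: nw sum_distrib_left power_mult_distrib algebra_simps)
    also have "\<dots> = T" using k2 L_nz T_pos
      by (simp add: c_def field_simps power2_eq_square)
    finally show ?thesis .
  qed
  moreover have "moment_inertia m r' = (norm L)^2 / (2*T)"
  proof -
    have "moment_inertia m r' = k^2 * S"
      unfolding moment_inertia_def r'_def S_def
      by (simp add: nu sum_distrib_left power_mult_distrib algebra_simps)
    then show ?thesis using k2 by simp
  qed
  ultimately show ?thesis by blast
qed



lemma lin_aux: "(a::real) \<le> (N::real) \<Longrightarrow> c = N \<Longrightarrow> p = c - b \<Longrightarrow> q = a - e \<Longrightarrow> N \<le> (q + p)/2 \<Longrightarrow> e + b \<le> 0"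
  by (simp add: field_simps)

lemma planar_min:
  fixes m :: "'n::finite \<Rightarrow> real" and T :: real and L :: "real^3"
    and r v :: "'n \<Rightarrow> real^3"
  assumes m_pos: "\<And>i. m i > 0"
    and L_nz: "L \<noteq> 0"
    and T_pos: "T > 0"
    and L_eq: "ang_mom m r v = L"
    and T_eq: "kin_energy m v = T"
    and minim: "\<And>r' v'. r' \<in> config_space \<Longrightarrow> ang_mom m r' v' = L \<Longrightarrow>
                  kin_energy m v' = T \<Longrightarrow> moment_inertia m r \<le> moment_inertia m r'"
  shows "\<forall>i. r i \<bullet> L = 0 \<and> v i \<bullet> L = 0"
proof -
  have gle: "moment_inertia m r \<le> (norm L)^2 / (2*T)"
  proof -
    obtain r' v' where "r' \<in> config_space" "ang_mom m r' v' = L" "kin_energy m v' = T"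
           "moment_inertia m r' = (norm L)^2 / (2*T)"
      using exists_min_state[of m L T] m_pos L_nz T_pos by blast
    then show ?thesis using minim by force
  qed
  define n where "n = sgn L"
  have n1: "norm n = 1" using L_nz by (simp add: n_def norm_sgn)
  have Ln: "L \<bullet> n = norm L" unfolding n_def sgn_div_norm
    using L_nz by (simp add: power2_norm_eq_inner[symmetric] power2_eq_square)
  define l where "l = 2 * T / norm L"
  have l_pos: "l > 0" using L_nz T_pos by (simp add: l_def)
  define A where "A = (\<Sum>i\<in>UNIV. m i * (r i \<bullet> n)^2)"
  define B where "B = (\<Sum>i\<in>UNIV. m i * (v i \<bullet> n)^2)"
  have A0: "A \<ge> 0" unfolding A_def by (intro sum_nonneg) (simp add: m_pos less_imp_le)
  have B0: "B \<ge> 0" unfolding B_def by (intro sum_nonneg) (simp add: m_pos less_imp_le)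
  have "norm L = (\<Sum>i\<in>UNIV. m i * (cross3 (r i) (v i) \<bullet> n))"
    using Ln L_eq unfolding ang_mom_def by (metis (no_types, lifting) inner_sum_left inner_scaleR_left sum.cong)
  also have "\<dots> \<le> (\<Sum>i\<in>UNIV. m i * ((l * ((norm (r i))^2 - (r i \<bullet> n)^2) + ((norm (v i))^2 - (v i \<bullet> n)^2) / l) / 2))"
    by (intro sum_mono mult_left_mono key_ineq[OF n1 l_pos]) (simp add: m_pos less_imp_le)
  also have "\<dots> = (l * (moment_inertia m r - A) + (2 * kin_energy m v - B) / l) / 2"
  proof -
    have "(\<Sum>i\<in>UNIV. m i * ((l * ((norm (r i))^2 - (r i \<bullet> n)^2) + ((norm (v i))^2 - (v i \<bullet> n)^2) / l) / 2))
        = (\<Sum>i\<in>UNIV. (l * (m i * (norm (r i))^2) - l * (m i * (r i \<bullet> n)^2) + (m i * (norm (v i))^2) / l - (m i * (v i \<bullet> n)^2) / l) / 2)"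
      using l_pos by (intro sum.cong refl) (simp add: field_simps)
    also have "\<dots> = (l * (\<Sum>i\<in>UNIV. m i * (norm (r i))^2) - l * A + (\<Sum>i\<in>UNIV. m i * (norm (v i))^2) / l - B / l) / 2"
      unfolding A_def B_def
      by (simp only: sum_divide_distrib[symmetric] sum.distrib sum_subtractf sum_distrib_left)
    also have "\<dots> = (l * (moment_inertia m r - A) + (2 * kin_energy m v - B) / l) / 2"
      unfolding moment_inertia_def kin_energy_def
      by (simp add: right_diff_distrib diff_divide_distrib)
    finally show ?thesis .
  qed
  finally have ineq: "norm L \<le> (l * (moment_inertia m r - A) + (2 * T - B) / l) / 2" using T_eq by simp
  have "l * moment_inertia m r \<le> norm L"
    using mult_left_mono[OF gle less_imp_le[OF l_pos]] L_nz T_pos by (simp add: l_def power2_eq_square)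
  moreover have "2 * T / l = norm L" using L_nz T_pos by (simp add: l_def)
  moreover have "(2*T - B)/l = 2*T/l - B/l" by (simp add: diff_divide_distrib)
  moreover have "l * (moment_inertia m r - A) = l * moment_inertia m r - l * A" by (simp add: right_diff_distrib)
  ultimately have "l * A + B / l \<le> 0" using ineq by (rule lin_aux)
  moreover have "B / l \<ge> 0" using B0 l_pos by simp
  moreover have "l * A \<ge> 0" using A0 l_pos by simp
  ultimately have "l * A = 0" "B / l = 0" by linarith+
  then have "A = 0" "B = 0" using l_pos by simp_all
  have "\<forall>i\<in>UNIV. m i * (r i \<bullet> n)^2 = 0" using \<open>A = 0\<close> unfolding A_def
    by (subst (asm) sum_nonneg_eq_0_iff) (auto simp: m_pos less_imp_le)
  moreover have "\<forall>i\<in>UNIV. m i * (v i \<bullet> n)^2 = 0" using \<open>B = 0\<close> unfolding B_def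
    by (subst (asm) sum_nonneg_eq_0_iff) (auto simp: m_pos less_imp_le)
  ultimately have "r i \<bullet> n = 0 \<and> v i \<bullet> n = 0" for i using m_pos[of i] by (metis less_irrefl mult_eq_0_iff power_eq_0_iff UNIV_I)
  then show ?thesis unfolding n_def sgn_div_norm using L_nz by simp
qed



lemma inner_deriv:
  fixes f :: "real \<Rightarrow> real^3"
  assumes "(f has_vector_derivative f') (at t)"
  shows "((\<lambda>s. f s \<bullet> n) has_real_derivative (f' \<bullet> n)) (at t)"
  unfolding has_real_derivative_iff_has_vector_derivative
  using bounded_linear.has_vector_derivative[OF bounded_linear_inner_left assms] .

lemma gronwall_zero:
  fixes E E' :: "real \<Rightarrow> real" and a b K :: real
  assumes ab: "a \<le> b"
    and d: "\<And>s. a \<le> s \<Longrightarrow> s \<le> b \<Longrightarrow> (E has_real_derivative E' s) (at s)"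
    and bd: "\<And>s. a \<le> s \<Longrightarrow> s \<le> b \<Longrightarrow> \<bar>E' s\<bar> \<le> K * E s"
    and nn: "\<And>s. a \<le> s \<Longrightarrow> s \<le> b \<Longrightarrow> E s \<ge> 0"
  shows "E a = 0 \<Longrightarrow> E b = 0" and "E b = 0 \<Longrightarrow> E a = 0"
proof -
  assume Ea: "E a = 0"
  have "(\<lambda>s. E s * exp (- K * s)) a \<ge> (\<lambda>s. E s * exp (- K * s)) b"
  proof (rule DERIV_nonpos_imp_nonincreasing[OF ab])
    fix s assume s: "a \<le> s" "s \<le> b"
    have "((\<lambda>s. E s * exp (- K * s)) has_real_derivative
            (E' s * exp (- K * s) + E s * (exp (- K * s) * (- K)))) (at s)"
      by (auto intro!: derivative_eq_intros d[OF s])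
    moreover have "E' s * exp (- K * s) + E s * (exp (- K * s) * (- K)) = (E' s - K * E s) * exp (- K * s)"
      by (simp add: algebra_simps)
    moreover have "E' s - K * E s \<le> 0" using bd[OF s] by linarith
    ultimately show "\<exists>y. ((\<lambda>s. E s * exp (- K * s)) has_real_derivative y) (at s) \<and> y \<le> 0"
      by (metis mult_nonpos_nonneg exp_ge_zero)
  qed
  then have "E b * exp (- K * b) \<le> 0" using Ea by simp
  then have "E b \<le> 0" by (simp add: mult_le_0_iff)
  then show "E b = 0" using nn[of b] ab by simp
next
  assume Eb: "E b = 0"
  have "(\<lambda>s. E s * exp (K * s)) a \<le> (\<lambda>s. E s * exp (K * s)) b"
  proof (rule DERIV_nonneg_imp_nondecreasing[OF ab])
    fix s assume s: "a \<le> s" "s \<le> b"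
    have "((\<lambda>s. E s * exp (K * s)) has_real_derivative
            (E' s * exp (K * s) + E s * (exp (K * s) * K))) (at s)"
      by (auto intro!: derivative_eq_intros d[OF s])
    moreover have "E' s * exp (K * s) + E s * (exp (K * s) * K) = (E' s + K * E s) * exp (K * s)"
      by (simp add: algebra_simps)
    moreover have "E' s + K * E s \<ge> 0" using bd[OF s] by linarith
    ultimately show "\<exists>y. ((\<lambda>s. E s * exp (K * s)) has_real_derivative y) (at s) \<and> y \<ge> 0"
      by (metis mult_nonneg_nonneg exp_ge_zero)
  qed
  then have "E a * exp (K * a) \<le> 0" using Eb by simp
  then have "E a \<le> 0" by (simp add: mult_le_0_iff)
  then show "E a = 0" using nn[of a] ab by simp
qed

lemma sq_bound:
  fixes w p q E :: real
  assumes "w^2 \<le> E" "p^2 \<le> E" "q^2 \<le> E"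
  shows "\<bar>2 * w * (p - q)\<bar> \<le> 4 * E"
proof -
  have h: "2 * \<bar>x\<bar> * \<bar>y\<bar> \<le> x^2 + y^2" for x y :: real
  proof -
    have "0 \<le> (\<bar>x\<bar> - \<bar>y\<bar>)^2" by simp
    then show ?thesis by (simp add: power2_eq_square algebra_simps)
  qed
  have "\<bar>2 * w * (p - q)\<bar> \<le> 2 * \<bar>w\<bar> * \<bar>p\<bar> + 2 * \<bar>w\<bar> * \<bar>q\<bar>"
  proof -
    have "\<bar>p - q\<bar> \<le> \<bar>p\<bar> + \<bar>q\<bar>" by (rule abs_triangle_ineq4)
    then have "2 * \<bar>w\<bar> * \<bar>p - q\<bar> \<le> 2 * \<bar>w\<bar> * (\<bar>p\<bar> + \<bar>q\<bar>)" by (simp add: mult_left_mono)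
    then show ?thesis by (simp add: abs_mult distrib_left)
  qed
  also have "\<dots> \<le> (w^2 + p^2) + (w^2 + q^2)" using h[of w p] h[of w q] by linarith
  also have "\<dots> \<le> 4 * E" using assms by linarith
  finally show ?thesis .
qed



lemma planar_flow:
  fixes m :: "'n::finite \<Rightarrow> real" and n :: "real^3"
  assumes sol: "nbody_solution \<gamma> m I x x'" and I0: "0 \<in> I" and tI: "t \<in> I"
    and init: "\<forall>i. x 0 i \<bullet> n = 0 \<and> x' 0 i \<bullet> n = 0"
  shows "\<forall>i. x t i \<bullet> n = 0 \<and> x' t i \<bullet> n = 0"
proof -
  have intv: "is_interval I" and conf: "\<And>s. s \<in> I \<Longrightarrow> x s \<in> config_space"
    and dx: "\<And>s i. s \<in> I \<Longrightarrow> ((\<lambda>s. x s i) has_vector_derivative x' s i) (at s)"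
    and dv: "\<And>s i. s \<in> I \<Longrightarrow> ((\<lambda>s. x' s i) has_vector_derivative
          ((1 / m i) *\<^sub>R (\<Sum>j\<in>UNIV - {i}.
              (\<gamma> * m i * m j / (norm (x s j - x s i))^3) *\<^sub>R (x s j - x s i)))) (at s)"
    using sol unfolding nbody_solution_def by auto
  define a where "a = min 0 t"
  define b where "b = max 0 t"
  have ab: "a \<le> b" by (simp add: a_def b_def)
  have sub: "{a..b} \<subseteq> I"
  proof
    fix s assume "s \<in> {a..b}"
    then have "a \<le> s" "s \<le> b" by auto
    moreover have "a \<in> I" "b \<in> I" using I0 tI by (auto simp: a_def b_def min_def max_def)
    ultimately show "s \<in> I" using mem_is_interval_1_I[OF intv] by blast
  qed
  define z where "z i s = x s i \<bullet> n" for i s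
  define w where "w i s = x' s i \<bullet> n" for i s
  define c where "c i j s = (1 / m i) * (\<gamma> * m i * m j / (norm (x s j - x s i))^3)" for i j s
  define acc where "acc i s = (\<Sum>j\<in>UNIV-{i}. c i j s * (z j s - z i s))" for i s
  have dz: "(z i has_real_derivative w i s) (at s)" if "s \<in> I" for i s
    unfolding z_def w_def using inner_deriv[OF dx[OF that]] .
  have dw: "(w i has_real_derivative acc i s) (at s)" if "s \<in> I" for i s
  proof -
    have eq: "((1 / m i) *\<^sub>R (\<Sum>j\<in>UNIV - {i}.
              (\<gamma> * m i * m j / (norm (x s j - x s i))^3) *\<^sub>R (x s j - x s i))) \<bullet> n = acc i s"
      unfolding acc_def c_def z_def
      by (simp only: inner_scaleR_left inner_sum_left inner_diff_left sum_distrib_left mult.assoc)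
    show ?thesis unfolding w_def using inner_deriv[where n=n, OF dv[OF that, of i], unfolded eq] .
  qed
  define E where "E s = (\<Sum>i\<in>UNIV. (z i s)^2 + (w i s)^2)" for s
  define E' where "E' s = (\<Sum>i\<in>UNIV. 2 * z i s * w i s + 2 * w i s * acc i s)" for s
  have dE: "(E has_real_derivative E' s) (at s)" if "s \<in> I" for s
  proof -
    have "((\<lambda>s. (z i s)^2 + (w i s)^2) has_real_derivative 2 * z i s * w i s + 2 * w i s * acc i s) (at s)" for i
      using dz[OF that, of i] dw[OF that, of i]
      by (auto intro!: derivative_eq_intros)
    then have "((\<lambda>s. \<Sum>i\<in>UNIV. (z i s)^2 + (w i s)^2) has_real_derivative
                  (\<Sum>i\<in>UNIV. 2 * z i s * w i s + 2 * w i s * acc i s)) (at s)"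
      by (intro DERIV_sum) auto
    then show ?thesis unfolding E_def E'_def .
  qed
  have cx: "continuous_on {a..b} (\<lambda>s. x s j)" for j
    by (rule continuous_on_vector_derivative)
       (use sub dx in \<open>blast intro: has_vector_derivative_at_within\<close>)
  have cc: "continuous_on {a..b} (c i j)" if "j \<noteq> i" for i j
  proof -
    have "norm (x s j - x s i) ^ 3 \<noteq> 0" if "s \<in> {a..b}" for s
      using conf[of s] sub that \<open>j \<noteq> i\<close> unfolding config_space_def by auto
    then show ?thesis unfolding c_def
      by (intro continuous_intros cx) auto
  qed
  define Cf where "Cf s = (\<Sum>i\<in>UNIV. \<Sum>j\<in>UNIV-{i}. \<bar>c i j s\<bar>)" for s
  have "continuous_on {a..b} Cf" unfolding Cf_def
    by (intro continuous_on_sum continuous_on_rabs cc) auto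
  then have "compact (Cf ` {a..b})" by (rule compact_continuous_image[OF _ compact_Icc])
  then obtain C0 where C0: "\<forall>y\<in>Cf ` {a..b}. norm y \<le> C0"
    using compact_imp_bounded bounded_iff by metis
  define C where "C = max C0 0"
  have C: "Cf s \<le> C" if "s \<in> {a..b}" for s using C0 that by (force simp: C_def)
  have C_nn: "C \<ge> 0" by (simp add: C_def)
  have Enn: "E s \<ge> 0" for s unfolding E_def by (intro sum_nonneg) auto
  have zE: "(z i s)^2 \<le> E s" and wE: "(w i s)^2 \<le> E s" for i s
  proof -
    have "(z i s)^2 + (w i s)^2 \<le> E s" unfolding E_def
      by (rule member_le_sum[where f = "\<lambda>i. (z i s)^2 + (w i s)^2"]) auto
    moreover have "0 \<le> (z i s)^2" "0 \<le> (w i s)^2" by simp_all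
    ultimately show "(z i s)^2 \<le> E s" "(w i s)^2 \<le> E s" by linarith+
  qed
  have bd: "\<bar>E' s\<bar> \<le> (1 + 4 * C) * E s" if s: "a \<le> s" "s \<le> b" for s
  proof -
    have t1: "\<bar>2 * z i s * w i s\<bar> \<le> (z i s)^2 + (w i s)^2" for i
    proof -
      have "0 \<le> (\<bar>z i s\<bar> - \<bar>w i s\<bar>)^2" by simp
      then show ?thesis by (simp add: power2_eq_square algebra_simps abs_mult)
    qed
    have t2: "\<bar>2 * w i s * acc i s\<bar> \<le> 4 * E s * (\<Sum>j\<in>UNIV-{i}. \<bar>c i j s\<bar>)" for i
    proof -
      have "2 * w i s * acc i s = (\<Sum>j\<in>UNIV-{i}. c i j s * (2 * w i s * (z j s - z i s)))"
        unfolding acc_def by (simp add: sum_distrib_left algebra_simps)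
      also have "\<bar>\<dots>\<bar> \<le> (\<Sum>j\<in>UNIV-{i}. \<bar>c i j s * (2 * w i s * (z j s - z i s))\<bar>)"
        by (rule sum_abs)
      also have "\<dots> \<le> (\<Sum>j\<in>UNIV-{i}. \<bar>c i j s\<bar> * (4 * E s))"
      proof (intro sum_mono)
        fix j
        have "\<bar>c i j s * (2 * w i s * (z j s - z i s))\<bar> = \<bar>c i j s\<bar> * \<bar>2 * w i s * (z j s - z i s)\<bar>"
          by (rule abs_mult)
        also have "\<dots> \<le> \<bar>c i j s\<bar> * (4 * E s)"
          by (rule mult_left_mono[OF sq_bound[OF wE zE zE]]) simp
        finally show "\<bar>c i j s * (2 * w i s * (z j s - z i s))\<bar> \<le> \<bar>c i j s\<bar> * (4 * E s)" .
      qed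
      also have "\<dots> = 4 * E s * (\<Sum>j\<in>UNIV-{i}. \<bar>c i j s\<bar>)"
        by (simp add: sum_distrib_left sum_distrib_right mult.commute)
      finally show ?thesis .
    qed
    have "\<bar>E' s\<bar> \<le> (\<Sum>i\<in>UNIV. \<bar>2 * z i s * w i s + 2 * w i s * acc i s\<bar>)"
      unfolding E'_def by (rule sum_abs)
    also have "\<dots> \<le> (\<Sum>i\<in>UNIV. ((z i s)^2 + (w i s)^2) + 4 * E s * (\<Sum>j\<in>UNIV-{i}. \<bar>c i j s\<bar>))"
      by (intro sum_mono order.trans[OF abs_triangle_ineq] add_mono t1 t2)
    also have "\<dots> = E s + 4 * E s * Cf s"
      unfolding E_def Cf_def by (simp add: sum.distrib sum_distrib_left)
    also have "\<dots> \<le> E s + 4 * E s * C"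
      using C[of s] s Enn[of s] by (simp add: mult_left_mono)
    also have "\<dots> = (1 + 4 * C) * E s" by (simp add: algebra_simps)
    finally show ?thesis .
  qed
  have dE': "(E has_real_derivative E' s) (at s)" if "a \<le> s" "s \<le> b" for s
    using dE sub that by auto
  have E0: "E 0 = 0" unfolding E_def z_def w_def using init by simp
  have "E t = 0"
  proof (cases "0 \<le> t")
    case True
    then have "a = 0" "b = t" by (auto simp: a_def b_def)
    then show ?thesis using gronwall_zero(1)[OF ab dE' bd Enn] E0 by simp
  next
    case False
    then have "a = t" "b = 0" by (auto simp: a_def b_def)
    then show ?thesis using gronwall_zero(2)[OF ab dE' bd Enn] E0 by simp
  qed
  then have "(z i t)^2 \<le> 0" "(w i t)^2 \<le> 0" for i using zE[of i t] wE[of i t] by simp_all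
  then show ?thesis unfolding z_def w_def by (metis power2_less_eq_zero_iff order_le_less)
qed

theorem theorem10p1:
  fixes m :: "'n::finite \<Rightarrow> real" and \<gamma> T :: real and L :: "real^3"
    and r v :: "'n \<Rightarrow> real^3"
  assumes N: "CARD('n) \<ge> 2"
    and m_pos: "\<And>i. m i > 0"
    and gamma_pos: "\<gamma> > 0"
    and L_nz: "L \<noteq> 0"
    and T_pos: "T > 0"
    and r_conf: "r \<in> config_space"
    and L_eq: "ang_mom m r v = L"
    and T_eq: "kin_energy m v = T"
    and minim: "\<And>r' v'. r' \<in> config_space \<Longrightarrow> ang_mom m r' v' = L \<Longrightarrow>
                  kin_energy m v' = T \<Longrightarrow> moment_inertia m r \<le> moment_inertia m r'"
  shows "(\<forall>i. r i \<bullet> L = 0 \<and> v i \<bullet> L = 0) \<and>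
         (\<forall>I x x'. nbody_solution \<gamma> m I x x' \<and> 0 \<in> I \<and> x 0 = r \<and> x' 0 = v \<longrightarrow>
            (\<forall>t\<in>I. \<forall>i. x t i \<bullet> L = 0 \<and> x' t i \<bullet> L = 0))"
  proof -
  have P: "\<forall>i. r i \<bullet> L = 0 \<and> v i \<bullet> L = 0"
    using planar_min[where m=m and L=L and T=T and r=r and v=v] m_pos L_nz T_pos L_eq T_eq minim
    by blast
  have Q: "\<forall>t\<in>I. \<forall>i. x t i \<bullet> L = 0 \<and> x' t i \<bullet> L = 0"
    if "nbody_solution \<gamma> m I x x'" "0 \<in> I" "x 0 = r" "x' 0 = v" for I x x'
  proof
    fix t assume "t \<in> I"
    show "\<forall>i. x t i \<bullet> L = 0 \<and> x' t i \<bullet> L = 0"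
      by (rule planar_flow[OF that(1) that(2) \<open>t \<in> I\<close>]) (use P that in simp)
  qed
  show ?thesis using P Q by blast
qed

end
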